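(* For every $\alpha>0$ the function $e^{-\alpha\Omega}$ is integrable on the Atiyah–Hitchin manifold $M_{AH}$ with respect to the Riemannian volume form, i.e. $$\int_{(0,1)\times SO(3)}e^{-\alpha\Omega}\,\frac{\beta^2\gamma^2\delta^2}{4k^2(1-k^2)K^2}\,dm\,\sigma_x\sigma_y\sigma_z<\infty .$$
   Context: The Atiyah–Hitchin manifold $M_{AH}$ (moduli of centred charge-2 monopoles on $\mathbb{R}^3$) contains an open dense subset identified with $(0,1)\times SO(3)/K_4$ ($K_4$ the Klein four-group), with parameter $k\in(0,1)$ and coordinate $m=k^2$, on which the metric is $$ds^2=\frac{\beta^2\gamma^2\delta^2}{(4k^2(1-k^2)K^2)^2}dm^2+\beta^2\sigma_x^2+\gamma^2\sigma_y^2+\delta^2\sigma_z^2,$$ where $(\sigma_x,\sigma_y,\sigma_z)$ is an orthonormal left-invariant coframe on $SO(3)$, $K=K(k)=\int_0^{\pi/2}(1-k^2\sin^2\phi)^{-1/2}d\phi$ and $E=E(k)=\int_0^{\pi/2}(1-k^2\sin^2\phi)^{1/2}d\phi$ are the complete elliptic integrals, and $\beta,\gamma,\delta$ are determined by $\beta\gamma=-EK$, $\gamma\delta=-EK+K^2$, $\beta\delta=-EK+(1-k^2)K^2$. Thus the volume form is $\frac{\beta^2\gamma^2\delta^2}{4k^2(1-k^2)K^2}dm\,\sigma_x\sigma_y\sigma_z$. In Euler angles $(\varphi,\theta,\psi)$ on $SO(3)$, Olivier's Kähler potential for the complex structure $I_3$ is $$\Omega=\frac{\beta\gamma+\gamma\delta+\delta\beta}{8}+\frac18\big(\gamma\delta\sin^2\theta\cos^2\psi+\delta\beta\sin^2\theta\sin^2\psi+\gamma\beta\cos^2\theta\big),$$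 which extends continuously to $M_{AH}$. *)

theory Defs
  imports "HOL-Analysis.Analysis"
begin

definition ellK :: "real \<Rightarrow> real" where
  "ellK k = integral {0..pi/2} (\<lambda>\<phi>. 1 / sqrt (1 - k^2 * (sin \<phi>)^2))"

definition ellE :: "real \<Rightarrow> real" where
  "ellE k = integral {0..pi/2} (\<lambda>\<phi>. sqrt (1 - k^2 * (sin \<phi>)^2))"

text \<open>The products beta*gamma, gamma*delta, beta*delta as functions of k.\<close>
definition AH_bg :: "real \<Rightarrow> real" where
  "AH_bg k = - ellE k * ellK k"

definition AH_gd :: "real \<Rightarrow> real" where
  "AH_gd k = - ellE k * ellK k + (ellK k)^2"

definition AH_bd :: "real \<Rightarrow> real" where
  "AH_bd k = - ellE k * ellK k + (1 - k^2) * (ellK k)^2"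

definition AH_b2g2d2 :: "real \<Rightarrow> real" where
  "AH_b2g2d2 k = AH_bg k * AH_gd k * AH_bd k"

text \<open>Density of the volume form w.r.t. dm sigma_x sigma_y sigma_z, with m = k^2.\<close>
definition AH_vol :: "real \<Rightarrow> real" where
  "AH_vol k = AH_b2g2d2 k / (4 * k^2 * (1 - k^2) * (ellK k)^2)"

text \<open>Olivier's Kaehler potential in Euler angles (independent of the first angle).\<close>
definition AH_Omega :: "real \<Rightarrow> real \<Rightarrow> real \<Rightarrow> real" where
  "AH_Omega k \<theta> \<psi> =
     (AH_bg k + AH_gd k + AH_bd k) / 8
     + (AH_gd k * (sin \<theta>)^2 * (cos \<psi>)^2 + AH_bd k * (sin \<theta>)^2 * (sin \<psi>)^2
        + AH_bg k * (cos \<theta>)^2) / 8"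

text \<open>Parameter domain: m in (0,1), Euler angles (phi, theta, psi) covering SO(3).
  The left-invariant volume sigma_x sigma_y sigma_z equals sin(theta) dphi dtheta dpsi.\<close>
definition AH_domain :: "(real \<times> real \<times> real \<times> real) set" where
  "AH_domain = {0<..<1} \<times> {0..2*pi} \<times> {0..pi} \<times> {0..2*pi}"

definition AH_integrand :: "real \<Rightarrow> real \<times> real \<times> real \<times> real \<Rightarrow> real" where
  "AH_integrand \<alpha> x = (case x of (m, \<phi>, \<theta>, \<psi>) \<Rightarrow>
      exp (- \<alpha> * AH_Omega (sqrt m) \<theta> \<psi>) * AH_vol (sqrt m) * sin \<theta>)"

end

theory Submission
  imports Defs
begin

lemma sin2_le: "(sin (x::real))^2 \<le> 1"
  by (metis abs_sin_le_one abs_square_le_1)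

lemma den_pos:
  fixes k x :: real assumes "0 < k" "k < 1"
  shows "0 < 1 - k^2 * (sin x)^2"
proof -
  have "(sin x)^2 \<le> 1" by (simp add: sin2_le)
  moreover have "k^2 < 1" using assms by (simp add: power_less_one_iff abs_if)
  moreover have "k^2 \<ge> 0" by simp
  ultimately have "k^2 * (sin x)^2 < 1"
    by (metis dual_order.strict_trans2 mult_left_le mult.commute)
  then show ?thesis by simp
qed

lemma den_facts:
  fixes k x :: real assumes "0 < k" "k < 1"
  shows "k^2 * (sin x)^2 < 1" "k^2 * (sin x)^2 \<noteq> 1" "k^2 * (sin x)^2 \<le> 1"
  using den_pos[OF assms, of x] by auto

lemma intK:
  fixes k :: real assumes "0 < k" "k < 1"
  shows "(\<lambda>\<phi>. 1 / sqrt (1 - k^2 * (sin \<phi>)^2)) integrable_on {0..pi/2}"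
  apply (rule integrable_continuous_interval)
  using den_facts[OF assms] by (intro continuous_intros) auto

lemma intE:
  fixes k :: real
  shows "(\<lambda>\<phi>. sqrt (1 - k^2 * (sin \<phi>)^2)) integrable_on {0..pi/2}"
  by (rule integrable_continuous_interval) (intro continuous_intros)

lemma int_cK:
  fixes k c :: real assumes "0 < k" "k < 1"
  shows "(\<lambda>\<phi>. c / sqrt (1 - k^2 * (sin \<phi>)^2)) integrable_on {0..pi/2}"
  apply (rule integrable_continuous_interval)
  using den_facts[OF assms] by (intro continuous_intros) auto

lemma int_cKeq:
  fixes k c :: real
  shows "integral {0..pi/2} (\<lambda>\<phi>. c / sqrt (1 - k^2 * (sin \<phi>)^2)) = c * ellK k"
  unfolding ellK_def using integral_mult_right[of "{0..pi/2}" c "\<lambda>\<phi>. 1 / sqrt (1 - k^2 * (sin \<phi>)^2)"]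
  by simp

lemma E_le: fixes k :: real assumes "0<k" "k<1" shows "ellE k \<le> pi/2"
proof -
  have "ellE k \<le> integral {0..pi/2} (\<lambda>\<phi>. 1::real)"
    unfolding ellE_def
    apply (rule integral_le[OF intE])
     apply (rule integrable_const_ivl)
    using den_facts[OF assms] by (auto simp: less_imp_le)
  then show ?thesis by simp
qed

lemma E_ge: fixes k :: real assumes "0<k" "k<1" shows "ellE k \<ge> 0"
  unfolding ellE_def by (rule integral_nonneg[OF intE]) (simp add: den_facts[OF assms])

lemma K_le: fixes k :: real assumes "0<k" "k<1"
  shows "ellK k \<le> (pi/2) / sqrt (1 - k^2)"
proof -
  have "ellK k \<le> integral {0..pi/2} (\<lambda>\<phi>. 1 / sqrt (1 - k^2))"
    unfolding ellK_def
  proof (rule integral_le[OF intK[OF assms]])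
    show "(\<lambda>\<phi>. 1 / sqrt (1 - k^2)) integrable_on {0..pi/2}" by (rule integrable_const_ivl)
    fix x assume "x \<in> {0..pi/2::real}"
    have "k^2 < 1" using assms by (simp add: power_less_one_iff abs_if)
    have "1 - k^2 \<le> 1 - k^2 * (sin x)^2"
      using sin2_le[of x] by (simp add: mult_left_le)
    then show "1 / sqrt (1 - k^2 * (sin x)^2) \<le> 1 / sqrt (1 - k^2)"
      using \<open>k^2 < 1\<close> by (intro divide_left_mono) auto
  qed
  then show ?thesis by simp
qed

lemma K_ge0: fixes k :: real assumes "0<k" "k<1" shows "ellK k \<ge> 0"
  unfolding ellK_def by (rule integral_nonneg[OF intK[OF assms]]) (simp add: den_facts[OF assms])

lemma pt1:
  fixes k x :: real assumes "0<k" "k<1"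
  shows "0 \<le> 1 / sqrt (1 - k^2 * (sin x)^2) - sqrt (1 - k^2 * (sin x)^2)"
    "1 / sqrt (1 - k^2 * (sin x)^2) - sqrt (1 - k^2 * (sin x)^2) \<le> k^2 / sqrt (1 - k^2 * (sin x)^2)"
proof -
  define S where "S = 1 - k^2 * (sin x)^2"
  have S: "0 < S" "S \<le> 1" unfolding S_def using den_pos[OF assms, of x] by auto
  have s: "sqrt S > 0" "sqrt S * sqrt S = S" using S by auto
  have eq: "1 / sqrt S - sqrt S = (1 - S) / sqrt S"
    using s by (simp add: field_simps)
  have "1 - S \<le> k^2" unfolding S_def using sin2_le[of x] by (simp add: mult_left_le)
  then show "0 \<le> 1 / sqrt (1 - k^2 * (sin x)^2) - sqrt (1 - k^2 * (sin x)^2)"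
    "1 / sqrt (1 - k^2 * (sin x)^2) - sqrt (1 - k^2 * (sin x)^2) \<le> k^2 / sqrt (1 - k^2 * (sin x)^2)"
    using eq S s unfolding S_def[symmetric] by (auto intro: divide_right_mono)
qed

lemma pt2:
  fixes k x :: real assumes "0<k" "k<1"
  shows "0 \<le> sqrt (1 - k^2 * (sin x)^2) - (1 - k^2) / sqrt (1 - k^2 * (sin x)^2)"
    "sqrt (1 - k^2 * (sin x)^2) - (1 - k^2) / sqrt (1 - k^2 * (sin x)^2) \<le> k^2 / sqrt (1 - k^2 * (sin x)^2)"
proof -
  define S where "S = 1 - k^2 * (sin x)^2"
  have S: "0 < S" "S \<le> 1" unfolding S_def using den_pos[OF assms, of x] by auto
  have s: "sqrt S > 0" "sqrt S * sqrt S = S" using S by auto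
  have eq: "sqrt S - (1 - k^2) / sqrt S = (S - (1 - k^2)) / sqrt S"
    using s by (simp add: field_simps)
  have "S - (1 - k^2) = k^2 * (1 - (sin x)^2)" unfolding S_def by (simp add: algebra_simps)
  moreover have "0 \<le> 1 - (sin x)^2" "1 - (sin x)^2 \<le> 1" using sin2_le[of x] by auto
  ultimately have "0 \<le> S - (1 - k^2)" "S - (1 - k^2) \<le> k^2"
    by (auto simp: mult_left_le)
  then show "0 \<le> sqrt (1 - k^2 * (sin x)^2) - (1 - k^2) / sqrt (1 - k^2 * (sin x)^2)"
    "sqrt (1 - k^2 * (sin x)^2) - (1 - k^2) / sqrt (1 - k^2 * (sin x)^2) \<le> k^2 / sqrt (1 - k^2 * (sin x)^2)"
    using eq S s unfolding S_def[symmetric] by (auto intro: divide_right_mono)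
qed

lemma KmE:
  fixes k :: real assumes "0<k" "k<1"
  shows "0 \<le> ellK k - ellE k" "ellK k - ellE k \<le> k^2 * ellK k"
proof -
  have eq: "ellK k - ellE k = integral {0..pi/2} (\<lambda>x. 1 / sqrt (1 - k^2 * (sin x)^2) - sqrt (1 - k^2 * (sin x)^2))"
    unfolding ellK_def ellE_def by (rule integral_diff[symmetric, OF intK[OF assms] intE])
  have int: "(\<lambda>x. 1 / sqrt (1 - k^2 * (sin x)^2) - sqrt (1 - k^2 * (sin x)^2)) integrable_on {0..pi/2}"
    by (rule integrable_diff[OF intK[OF assms] intE])
  show "0 \<le> ellK k - ellE k" unfolding eq
    by (rule integral_nonneg[OF int]) (rule pt1[OF assms])
  have "ellK k - ellE k \<le> integral {0..pi/2} (\<lambda>x. k^2 / sqrt (1 - k^2 * (sin x)^2))"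
    unfolding eq by (rule integral_le[OF int int_cK[OF assms]]) (rule pt1[OF assms])
  then show "ellK k - ellE k \<le> k^2 * ellK k" by (simp only: int_cKeq)
qed

lemma EmqK:
  fixes k :: real assumes "0<k" "k<1"
  shows "0 \<le> ellE k - (1 - k^2) * ellK k" "ellE k - (1 - k^2) * ellK k \<le> k^2 * ellK k"
proof -
  have eq: "ellE k - (1 - k^2) * ellK k = integral {0..pi/2} (\<lambda>x. sqrt (1 - k^2 * (sin x)^2) - (1 - k^2) / sqrt (1 - k^2 * (sin x)^2))"
    unfolding int_cKeq[symmetric] unfolding ellE_def by (rule integral_diff[symmetric, OF intE int_cK[OF assms]])
  have int: "(\<lambda>x. sqrt (1 - k^2 * (sin x)^2) - (1 - k^2) / sqrt (1 - k^2 * (sin x)^2)) integrable_on {0..pi/2}"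
    by (rule integrable_diff[OF intE int_cK[OF assms]])
  show "0 \<le> ellE k - (1 - k^2) * ellK k" unfolding eq
    by (rule integral_nonneg[OF int]) (rule pt2[OF assms])
  have "ellE k - (1 - k^2) * ellK k \<le> integral {0..pi/2} (\<lambda>x. k^2 / sqrt (1 - k^2 * (sin x)^2))"
    unfolding eq by (rule integral_le[OF int int_cK[OF assms]]) (rule pt2[OF assms])
  then show "ellE k - (1 - k^2) * ellK k \<le> k^2 * ellK k" by (simp only: int_cKeq)
qed

lemma log_int:
  fixes c :: real assumes "0 < c"
  shows "((\<lambda>x. 1 / (c + pi/2 - x)) has_integral (ln (c + pi/2) - ln c)) {0..pi/2}"
proof -
  have "((\<lambda>x. 1 / (c + pi/2 - x)) has_integral ((- ln (c + pi/2 - pi/2)) - (- ln (c + pi/2 - 0)))) {0..pi/2}"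
  proof (rule fundamental_theorem_of_calculus)
    show "0 \<le> pi/2" by simp
    fix x assume x: "x \<in> {0..pi/2}"
    then have pos: "0 < c + pi/2 - x" using assms by auto
    have "((\<lambda>x. - ln (c + pi/2 - x)) has_real_derivative 1 / (c + pi/2 - x)) (at x within {0..pi/2})"
      using pos by (auto intro!: derivative_eq_intros simp: field_simps)
    then show "((\<lambda>x. - ln (c + pi/2 - x)) has_vector_derivative 1 / (c + pi/2 - x)) (at x within {0..pi/2})"
      by (simp add: has_real_derivative_iff_has_vector_derivative)
  qed
  then show ?thesis by simp
qed

lemma pt3:
  fixes k x :: real assumes "0<k" "k<1" "x \<in> {0..pi/2}"
  shows "1 / (sqrt (1 - k^2) + pi/2 - x) \<le> 1 / sqrt (1 - k^2 * (sin x)^2)"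
proof -
  define c where "c = sqrt (1 - k^2)"
  define t where "t = pi/2 - x"
  have k2: "k^2 < 1" using assms by (simp add: power_less_one_iff abs_if)
  have c: "0 < c" "c * c = 1 - k^2" unfolding c_def using k2 by auto
  have t: "0 \<le> t" unfolding t_def using assms by auto
  have cs: "cos x = sin t" unfolding t_def by (simp add: sin_cos_eq)
  have "sin t \<le> t" using t by (rule sin_x_le_x)
  moreover have "0 \<le> cos x" using assms by (intro cos_ge_zero) auto
  ultimately have ct: "(cos x)^2 \<le> t^2" using cs by (simp add: power_mono)
  have "1 - k^2 * (sin x)^2 = (1 - k^2) + k^2 * (cos x)^2"
  proof -
    have h: "k^2 * ((sin x)^2 + (cos x)^2) = k^2" by simp
    then show ?thesis unfolding distrib_left by linarith
  qed
  also have "\<dots> \<le> (1 - k^2) + (cos x)^2"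
    using k2 by (simp add: mult_left_le_one_le)
  also have "\<dots> \<le> (c + t)^2"
  proof -
    have e: "(c+t)^2 = c*c + t^2 + 2*(c*t)" by (simp add: power2_eq_square algebra_simps)
    have "0 \<le> c*t" using c t by simp
    then show ?thesis using e ct c(2) by linarith
  qed
  finally have "sqrt (1 - k^2 * (sin x)^2) \<le> c + t"
    using c t by (simp add: real_sqrt_le_iff real_le_lsqrt)
  moreover have "0 < sqrt (1 - k^2 * (sin x)^2)" using den_pos[OF assms(1,2)] by simp
  ultimately have "1 / (c + t) \<le> 1 / sqrt (1 - k^2 * (sin x)^2)"
    using c t by (intro divide_left_mono) auto
  moreover have "c + pi/2 - x = c + t" by (simp add: t_def)
  ultimately show ?thesis unfolding c_def[symmetric] by (simp only:)
qed

lemma K_ge_log: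
  fixes k :: real assumes "0<k" "k<1"
  shows "- ln (sqrt (1 - k^2)) \<le> ellK k"
proof -
  define c where "c = sqrt (1 - k^2)"
  have k2: "k^2 < 1" using assms by (simp add: power_less_one_iff abs_if)
  have c: "0 < c" unfolding c_def using k2 by auto
  have "ln (c + pi/2) \<ge> 0" using c pi_gt3 by simp
  then have "- ln c \<le> ln (c + pi/2) - ln c" by simp
  also have "\<dots> = integral {0..pi/2} (\<lambda>x. 1 / (c + pi/2 - x))"
    using log_int[OF c] by (simp add: integral_unique)
  also have "\<dots> \<le> ellK k" unfolding ellK_def
    by (rule integral_le[OF has_integral_integrable[OF log_int[OF c]] intK[OF assms]])
       (unfold c_def, rule pt3[OF assms])
  finally show ?thesis unfolding c_def .
qed

lemma Omega_lower:
  fixes k :: real assumes "0<k" "k<1"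
  shows "AH_Omega k \<theta> \<psi> \<ge> (ellK k)^2 / 16 - 7"
proof -
  define K where "K = ellK k"
  define E where "E = ellE k"
  define q where "q = 1 - k^2"
  have q: "0 < q" "q \<le> 1" unfolding q_def using assms by (auto simp: power_less_one_iff abs_if)
  have E: "0 \<le> E" "E \<le> 2" unfolding E_def using E_ge[OF assms] E_le[OF assms] pi_less_4 by auto
  have K: "0 \<le> K" unfolding K_def by (rule K_ge0[OF assms])
  have d1: "0 \<le> K - E" using KmE[OF assms] unfolding K_def E_def by auto
  have d2: "0 \<le> E - q * K" using EmqK[OF assms] unfolding K_def E_def q_def by auto
  define A where "A = (sin \<theta>)^2 * (cos \<psi>)^2"
  define B where "B = (sin \<theta>)^2 * (sin \<psi>)^2"
  define C where "C = (cos \<theta>)^2"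
  have A: "0 \<le> A" unfolding A_def by simp
  have B: "0 \<le> B" "B \<le> 1" unfolding B_def using sin2_le[of \<theta>] sin2_le[of \<psi>]
    by (auto intro: mult_le_one)
  have C: "0 \<le> C" "C \<le> 1" unfolding C_def by (auto simp: abs_square_le_1)
  define bg where "bg = - E * K"
  define gd where "gd = - E * K + K^2"
  define bd where "bd = - E * K + q * K^2"
  have gd0: "gd \<ge> 0" unfolding gd_def using d1 K
    by (metis diff_ge_0_iff_ge mult.commute mult_minus_left mult_right_mono power2_eq_square uminus_add_conv_diff add.commute)
  have bd0: "bd \<le> 0" proof -
    have "bd = - (K * (E - q * K))" unfolding bd_def by (simp add: algebra_simps power2_eq_square)
    moreover have "0 \<le> K * (E - q * K)" using K d2 by simp
    ultimately show ?thesis by simp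
  qed
  have bg0: "bg \<le> 0" unfolding bg_def using E K by simp
  have eqO: "AH_Omega k \<theta> \<psi> = (bg + gd + bd) / 8 + (gd * A + bd * B + bg * C) / 8"
    unfolding AH_Omega_def bg_def gd_def bd_def A_def B_def C_def AH_bg_def AH_gd_def AH_bd_def
      K_def E_def q_def by (simp add: algebra_simps)
  have "gd * A \<ge> 0" using gd0 A by simp
  moreover have "bd * B \<ge> bd" proof -
    have "bd * (1 - B) \<le> 0" using bd0 B by (simp add: mult_nonpos_nonneg)
    then show ?thesis by (simp add: algebra_simps)
  qed
  moreover have "bg * C \<ge> bg" proof -
    have "bg * (1 - C) \<le> 0" using bg0 C by (simp add: mult_nonpos_nonneg)
    then show ?thesis by (simp add: algebra_simps)
  qed
  moreover have "8 * AH_Omega k \<theta> \<psi> = bg + gd + bd + gd * A + bd * B + bg * C"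
    unfolding eqO by (simp add: field_simps)
  ultimately have "8 * AH_Omega k \<theta> \<psi> \<ge> 2 * bg + gd + 2 * bd" by linarith
  moreover have "2 * bg + gd + 2 * bd = K^2 + 2 * q * K^2 - 5 * (E * K)"
    unfolding bg_def gd_def bd_def by (simp add: algebra_simps)
  moreover have "q * K^2 \<ge> 0" using q by simp
  moreover have "E * K \<le> 2 * K" using E K by (simp add: mult_right_mono)
  moreover have "K^2 - 10 * K \<ge> K^2 / 2 - 50"
  proof -
    have "0 \<le> (K - 10)^2 / 2" by simp
    then show ?thesis by (simp add: power2_eq_square algebra_simps)
  qed
  ultimately have "8 * AH_Omega k \<theta> \<psi> \<ge> K^2 / 2 - 50" by linarith
  then show ?thesis unfolding K_def by linarith
qed

lemma vol_upper:
  fixes k :: real assumes "0<k" "k<1"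
  shows "\<bar>AH_vol k\<bar> \<le> 4 / (sqrt (1 - k^2))^5"
proof -
  define K where "K = ellK k"
  define E where "E = ellE k"
  define q where "q = 1 - k^2"
  define c where "c = sqrt q"
  have q: "0 < q" "q \<le> 1" unfolding q_def using assms by (auto simp: power_less_one_iff abs_if)
  have "q < 1" unfolding q_def using assms by simp
  have c: "0 < c" "c * c = q" "c \<le> 1" "c < 1" unfolding c_def using q \<open>q < 1\<close> by auto
  have E: "0 \<le> E" "E \<le> 2" unfolding E_def using E_ge[OF assms] E_le[OF assms] pi_less_4 by auto
  have K: "0 \<le> K" unfolding K_def by (rule K_ge0[OF assms])
  have Kpos: "0 < K" proof -
    have "- ln c > 0" using c by simp
    then show ?thesis using K_ge_log[OF assms] unfolding K_def c_def q_def by linarith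
  qed
  have Kup: "K \<le> 2 / c" proof -
    have "K \<le> (pi/2) / c" using K_le[OF assms] unfolding K_def c_def q_def .
    also have "\<dots> \<le> 2 / c" using c pi_less_4 by (intro divide_right_mono) auto
    finally show ?thesis .
  qed
  have d1: "0 \<le> K - E" "K - E \<le> k^2 * K" using KmE[OF assms] unfolding K_def E_def by auto
  have d2: "0 \<le> E - q * K" "E - q * K \<le> k^2 * K" using EmqK[OF assms] unfolding K_def E_def q_def by auto
  have k2: "0 < k^2" "k^2 \<le> 1" using assms by (auto simp: power_le_one)
  have num: "AH_b2g2d2 k = (E * K) * (K * (K - E)) * (K * (E - q * K))"
    unfolding AH_b2g2d2_def AH_bg_def AH_gd_def AH_bd_def K_def[symmetric] E_def[symmetric] q_def[symmetric]
    by (simp add: algebra_simps power2_eq_square)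
  have n1: "0 \<le> E * K" "E * K \<le> 2 * K" using E K by (auto simp: mult_right_mono)
  have n2: "0 \<le> K * (K - E)" "K * (K - E) \<le> K * (k^2 * K)" using K d1 by (auto simp: mult_left_mono)
  have n3: "0 \<le> K * (E - q * K)" "K * (E - q * K) \<le> K * (k^2 * K)" using K d2 by (auto simp: mult_left_mono)
  have "\<bar>AH_b2g2d2 k\<bar> = (E * K) * (K * (K - E)) * (K * (E - q * K))"
    unfolding num using n1 n2 n3 by simp
  also have "\<dots> \<le> (2 * K) * (K * (k^2 * K)) * (K * (k^2 * K))"
  proof -
    have p: "0 \<le> K * (k^2 * K)" using K k2 by simp
    have s1: "(E * K) * (K * (K - E)) \<le> (2 * K) * (K * (k^2 * K))"
      by (rule mult_mono[OF n1(2) n2(2)]) (use K p n1 n2 in auto)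
    show ?thesis
      by (rule mult_mono[OF s1 n3(2)]) (use K p n3 in auto)
  qed
  finally have nb: "\<bar>AH_b2g2d2 k\<bar> \<le> 2 * (k^2)^2 * K^5" by (simp add: algebra_simps power2_eq_square eval_nat_numeral)
  have den: "4 * k^2 * (1 - k^2) * (ellK k)^2 = 4 * k^2 * q * K^2" unfolding q_def K_def by simp
  have denpos: "0 < 4 * k^2 * q * K^2" using k2 q Kpos by simp
  have "\<bar>AH_vol k\<bar> = \<bar>AH_b2g2d2 k\<bar> / (4 * k^2 * q * K^2)"
    unfolding AH_vol_def den using denpos by simp
  also have "\<dots> \<le> 2 * (k^2)^2 * K^5 / (4 * k^2 * q * K^2)"
    using nb denpos by (intro divide_right_mono) auto
  also have "\<dots> = k^2 * K^3 / (2 * q)" using k2 Kpos q by (simp add: field_simps eval_nat_numeral)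
  also have "\<dots> \<le> K^3 / (2 * q)" using k2 q K by (intro divide_right_mono) (auto simp: mult_left_le_one_le)
  also have "\<dots> \<le> (2/c)^3 / (2 * q)" using Kup K q by (intro divide_right_mono power_mono) auto
  also have "\<dots> = 4 / c^5" using c by (simp add: field_simps eval_nat_numeral)
  finally show ?thesis unfolding c_def q_def .
qed

lemma integrand_bound:
  fixes k \<alpha> :: real assumes "0<k" "k<1" "0 < \<alpha>"
  shows "\<bar>exp (- \<alpha> * AH_Omega k \<theta> \<psi>) * AH_vol k * sin \<theta>\<bar> \<le> 4 * exp (7 * \<alpha> + 100 / \<alpha>)"
proof -
  define K where "K = ellK k"
  define c where "c = sqrt (1 - k^2)"
  define l where "l = - ln c"
  have c: "0 < c" "c < 1" unfolding c_def using assms by (auto simp: power_less_one_iff abs_if)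
  have l: "0 \<le> l" unfolding l_def using c by simp
  have Kl: "l \<le> K" unfolding l_def K_def c_def by (rule K_ge_log[OF assms(1,2)])
  have ce: "c = exp (- l)" unfolding l_def using c by simp
  have "4 / c^5 = 4 * exp (5 * l)" unfolding ce by (simp add: exp_minus field_simps exp_of_nat_mult[symmetric])
  then have V: "\<bar>AH_vol k\<bar> \<le> 4 * exp (5 * l)" using vol_upper[OF assms(1,2)] unfolding c_def by simp
  have "l^2 \<le> K^2" using l Kl by (simp add: power_mono)
  then have "- \<alpha> * AH_Omega k \<theta> \<psi> \<le> - \<alpha> * (l^2 / 16 - 7)"
    using Omega_lower[OF assms(1,2), of \<theta> \<psi>] assms(3) unfolding K_def
    by (intro mult_left_mono_neg) auto
  then have O: "exp (- \<alpha> * AH_Omega k \<theta> \<psi>) \<le> exp (- \<alpha> * (l^2 / 16 - 7))" by simp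
  have "\<bar>exp (- \<alpha> * AH_Omega k \<theta> \<psi>) * AH_vol k * sin \<theta>\<bar>
      = exp (- \<alpha> * AH_Omega k \<theta> \<psi>) * \<bar>AH_vol k\<bar> * \<bar>sin \<theta>\<bar>" by (simp add: abs_mult)
  also have "\<dots> \<le> exp (- \<alpha> * AH_Omega k \<theta> \<psi>) * \<bar>AH_vol k\<bar>"
    by (rule mult_left_le) (auto simp: abs_sin_le_one)
  also have "\<dots> \<le> exp (- \<alpha> * (l^2 / 16 - 7)) * (4 * exp (5 * l))"
    by (rule mult_mono[OF O V]) auto
  also have "\<dots> = 4 * exp (7 * \<alpha> + (5 * l - \<alpha> * l^2 / 16))"
    by (simp add: exp_add[symmetric] algebra_simps)
  also have "\<dots> \<le> 4 * exp (7 * \<alpha> + 100 / \<alpha>)"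
  proof -
    have "0 \<le> (\<alpha> * l / 4 - 10)^2" by simp
    then have "\<alpha> * (5 * l - \<alpha> * l^2 / 16) \<le> 100"
      by (simp add: power2_eq_square algebra_simps)
    then have "5 * l - \<alpha> * l^2 / 16 \<le> 100 / \<alpha>" using assms(3)
      by (simp add: field_simps mult.commute)
    then show ?thesis by simp
  qed
  finally show ?thesis .
qed



lemma K_pos: fixes k :: real assumes "0<k" "k<1" shows "ellK k > 0"
proof -
  have "0 < sqrt (1 - k^2)" "sqrt (1 - k^2) < 1" using assms by (auto simp: power_less_one_iff abs_if)
  then have "- ln (sqrt (1 - k^2)) > 0" by simp
  then show ?thesis using K_ge_log[OF assms] by linarith
qed

lemma contK: "continuous_on {0<..<1} (\<lambda>m::real. ellK (sqrt m))"
proof -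
  have "continuous_on {0<..<1} (\<lambda>m. integral (cbox 0 (pi/2)) (\<lambda>\<phi>. 1 / sqrt (1 - (sqrt m)^2 * (sin \<phi>)^2)))"
  proof (rule integral_continuous_on_param)
    have "\<And>x. x \<in> {0<..<1::real} \<times> cbox 0 (pi/2) \<Longrightarrow> (sqrt (fst x))^2 * (sin (snd x))^2 \<noteq> 1"
    proof -
      fix x :: "real \<times> real" assume "x \<in> {0<..<1::real} \<times> cbox 0 (pi/2)"
      then have "0 < sqrt (fst x)" "sqrt (fst x) < 1" by (auto simp: mem_Times_iff)
      then show "(sqrt (fst x))^2 * (sin (snd x))^2 \<noteq> 1" by (rule den_facts)
    qed
    then show "continuous_on ({0<..<1} \<times> cbox 0 (pi / 2)) (\<lambda>(x, t). 1 / sqrt (1 - (sqrt x)^2 * (sin t)^2))"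
      unfolding case_prod_beta by (intro continuous_intros) auto
  qed
  then show ?thesis unfolding ellK_def cbox_interval .
qed

lemma contE: "continuous_on {0<..<1} (\<lambda>m::real. ellE (sqrt m))"
proof -
  have "continuous_on {0<..<1} (\<lambda>m. integral (cbox 0 (pi/2)) (\<lambda>\<phi>. sqrt (1 - (sqrt m)^2 * (sin \<phi>)^2)))"
    by (rule integral_continuous_on_param) (unfold case_prod_beta, intro continuous_intros)
  then show ?thesis unfolding ellE_def cbox_interval .
qed

lemma cont_integrand:
  "continuous_on AH_domain (AH_integrand \<alpha>)"
proof -
  define P where "P = (fst :: real \<times> real \<times> real \<times> real \<Rightarrow> real)"
  have P: "continuous_on AH_domain P" unfolding P_def by (intro continuous_intros)
  have PU: "P ` AH_domain \<subseteq> {0<..<1}" unfolding P_def AH_domain_def by auto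
  have cK: "continuous_on AH_domain (\<lambda>x. ellK (sqrt (P x)))"
    using continuous_on_compose[OF P continuous_on_subset[OF contK PU]] by (simp add: o_def)
  have cE: "continuous_on AH_domain (\<lambda>x. ellE (sqrt (P x)))"
    using continuous_on_compose[OF P continuous_on_subset[OF contE PU]] by (simp add: o_def)
  have nz: "\<And>x. x \<in> AH_domain \<Longrightarrow> 4 * (sqrt (P x))^2 * (1 - (sqrt (P x))^2) * (ellK (sqrt (P x)))^2 \<noteq> 0"
  proof -
    fix x assume "x \<in> AH_domain"
    then have "P x \<in> {0<..<1}" using PU by auto
    then have "0 < sqrt (P x)" "sqrt (P x) < 1" by auto
    then show "4 * (sqrt (P x))^2 * (1 - (sqrt (P x))^2) * (ellK (sqrt (P x)))^2 \<noteq> 0"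
      using K_pos[of "sqrt (P x)"] by (auto simp: power_less_one_iff abs_if)
  qed
  have eq: "AH_integrand \<alpha> = (\<lambda>x. exp (- \<alpha> * AH_Omega (sqrt (P x)) (fst (snd (snd x))) (snd (snd (snd x))))
       * AH_vol (sqrt (P x)) * sin (fst (snd (snd x))))"
    unfolding AH_integrand_def P_def by (auto simp: fun_eq_iff split: prod.splits)
  show ?thesis unfolding eq AH_Omega_def AH_vol_def AH_b2g2d2_def AH_bg_def AH_gd_def AH_bd_def
    apply (intro continuous_intros cK cE)
    using P nz by simp_all
qed

lemma domain_borel: "AH_domain \<in> sets borel"
proof -
  have "AH_domain = ({0<..<1} \<times> UNIV) \<inter> (UNIV \<times> ({0..2*pi} \<times> {0..pi} \<times> {0..2*pi}))"
    unfolding AH_domain_def by auto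
  moreover have "open ({0<..<1::real} \<times> (UNIV :: (real \<times> real \<times> real) set))"
    by (intro open_Times) auto
  moreover have "closed ((UNIV :: real set) \<times> ({0..2*pi} \<times> {0..pi} \<times> {0..2*pi::real}))"
    by (intro closed_Times) auto
  ultimately show ?thesis by (metis borel_open borel_closed sets.Int)
qed

theorem mainTheorem11:
  fixes \<alpha> :: real
  assumes "\<alpha> > 0"
  shows "set_integrable lborel AH_domain (AH_integrand \<alpha>)"
proof -
  define C where "C = 4 * exp (7 * \<alpha> + 100 / \<alpha>)"
  have C: "0 \<le> C" unfolding C_def by simp
  have fin: "emeasure lborel AH_domain < \<infinity>"
    by (rule emeasure_bounded_finite) (unfold AH_domain_def, intro bounded_Times, auto)
  have int: "integrable lborel (\<lambda>x. indicator AH_domain x * C)"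
    using fin domain_borel by (intro integrable_mult_left) auto
  have meas: "(\<lambda>x. indicator AH_domain x *\<^sub>R AH_integrand \<alpha> x) \<in> borel_measurable lborel"
    using borel_measurable_continuous_on_indicator[OF domain_borel cont_integrand] by simp
  have bnd: "\<And>x. x \<in> AH_domain \<Longrightarrow> \<bar>AH_integrand \<alpha> x\<bar> \<le> C"
  proof -
    fix x assume x: "x \<in> AH_domain"
    obtain m \<phi> \<theta> \<psi> where xe: "x = (m, \<phi>, \<theta>, \<psi>)" by (cases x) auto
    have "0 < m" "m < 1" using x unfolding xe AH_domain_def by auto
    then have "0 < sqrt m" "sqrt m < 1" by auto
    then show "\<bar>AH_integrand \<alpha> x\<bar> \<le> C" unfolding xe AH_integrand_def C_def
      using integrand_bound[OF _ _ assms] by simp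
  qed
  show ?thesis unfolding set_integrable_def
  proof (rule Bochner_Integration.integrable_bound[OF int meas])
    show "AE x in lborel. norm (indicator AH_domain x *\<^sub>R AH_integrand \<alpha> x) \<le> norm (indicator AH_domain x * C)"
      using bnd C by (auto simp: indicator_def)
  qed
qed

end
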